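(* Let $G_\sigma$ be an ordered undirected graph on vertex set $\{1,\dots,p\}$ with edge set $E_\sigma$, let $U$ be a $p\times p$ positive definite matrix and let $\boldsymbol{\delta}=(\delta_1,\dots,\delta_p)$ with $\delta_i>0$ for all $i$. Then $$\int \pi^*_{U,\boldsymbol{\delta}}(L_I,D)\,d(L_I,D)<\infty,$$ and, under the probability distribution obtained by normalizing $\pi^*_{U,\boldsymbol{\delta}}$ (viewed as a distribution of $\Omega=LDL^T\in\mathbb{P}_{G_\sigma}$), $E[\Omega_{ij}]$ exists and is finite for all $i,j$.
   Context: For an ordered graph $G_\sigma$ on $\{1,\dots,p\}$ with (undirected) edge set $E_\sigma$, let $\mathbb{P}_{G_\sigma}$ be the set of $p\times p$ symmetric positive definite matrices $\Omega$ with $\Omega_{ij}=0$ whenever $i\neq j$ and $(i,j)\notin E_\sigma$. Every positive definite $\Omega$ has a unique modified Cholesky decomposition $\Omega=LDL^T$, $L$ lower triangular with unit diagonal, $D=\mathrm{diag}(D_1,\dots,D_p)$ with $D_i>0$. Let $L_I=\{L_{ij}: i>j,\ (i,j)\in E_\sigma\}$ (the independent entries); the map $\Omega\mapsto(L_I,D)$ is a bijection from $\mathbb{P}_{G_\sigma}$ onto $\mathbb{R}^{|L_I|}\times(0,\infty)^p$ (the other below-diagonal entries of $L$ are determined by the constraints $\Omega_{ij}=0$). Let $\nu_j=|\{i: i>j,(i,j)\in E_\sigma\}|$. The (unnormalized) generalized $G$-Wishart density with parameters $U,\boldsymbol\delta$ on $\mathbb{P}_{G_\sigma}$ is $\prod_{i=1}^p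 D_i^{\delta_i/2}\exp(-\tfrac12\mathrm{tr}(\Omega U))$; expressed in the coordinates $(L_I,D)$ (including the Jacobian $\prod_j D_j^{\nu_j}$) it is $$\pi^*_{U,\boldsymbol\delta}(L_I,D)=\Big(\prod_{j=1}^p D_j^{(\delta_j+2\nu_j)/2}\Big)\exp\Big(-\tfrac12\sum_{i=1}^p\sum_{j=1}^p U_{ij}\sum_{k=1}^{\min(i,j)}L_{ik}L_{jk}D_k\Big),$$ integrated with respect to Lebesgue measure on $\mathbb{R}^{|L_I|}\times(0,\infty)^p$. *)

theory Defs
  imports "HOL-Probability.Probability"
begin

text \<open>Vertices are 0,...,p-1 (0-indexed version of 1,...,p), ordered by the natural order.  L_I is a real function on the index
  set of independent entries, D a function on {..<p}.\<close>

definition Lidx :: "nat \<Rightarrow> (nat \<Rightarrow> nat \<Rightarrow> bool) \<Rightarrow> (nat \<times> nat) set" where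
  "Lidx p E = {(i, j). j < i \<and> i < p \<and> E i j}"

definition nu :: "nat \<Rightarrow> (nat \<Rightarrow> nat \<Rightarrow> bool) \<Rightarrow> nat \<Rightarrow> nat" where
  "nu p E j = card {i. j < i \<and> i < p \<and> E i j}"

text \<open>The full unit lower triangular factor L determined by the independent entries x and D:
  for a non-edge (i,j), i>j, the constraint Omega_ij = sum_{k<=j} L_ik L_jk D_k = 0 determines
  L_ij = -(sum_{k<j} L_ik L_jk D_k)/D_j.\<close>
function Lfull :: "(nat \<Rightarrow> nat \<Rightarrow> bool) \<Rightarrow> (nat \<times> nat \<Rightarrow> real) \<Rightarrow> (nat \<Rightarrow> real) \<Rightarrow> nat \<Rightarrow> nat \<Rightarrow> real" where
  "Lfull E x d i j =
     (if i = j then 1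
      else if i < j then 0
      else if E i j then x (i, j)
      else - (\<Sum>k<j. Lfull E x d i k * Lfull E x d j k * d k) / d j)"
  by pat_completeness auto
termination
  by (relation "Wellfounded.measure (\<lambda>(E, x, d, i, j). j)") auto

definition Omega :: "(nat \<Rightarrow> nat \<Rightarrow> bool) \<Rightarrow> (nat \<times> nat \<Rightarrow> real) \<Rightarrow> (nat \<Rightarrow> real) \<Rightarrow> nat \<Rightarrow> nat \<Rightarrow> real" where
  "Omega E x d i j = (\<Sum>k\<le>min i j. Lfull E x d i k * Lfull E x d j k * d k)"

definition pistar :: "nat \<Rightarrow> (nat \<Rightarrow> nat \<Rightarrow> bool) \<Rightarrow> (nat \<Rightarrow> nat \<Rightarrow> real) \<Rightarrow> (nat \<Rightarrow> real)
    \<Rightarrow> (nat \<times> nat \<Rightarrow> real) \<Rightarrow> (nat \<Rightarrow> real) \<Rightarrow> real" where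
  "pistar p E U \<delta> x d =
     (\<Prod>j<p. d j powr ((\<delta> j + 2 * real (nu p E j)) / 2)) *
     exp (- (1/2) * (\<Sum>i<p. \<Sum>j<p. U i j * (\<Sum>k\<le>min i j. Lfull E x d i k * Lfull E x d j k * d k)))"

text \<open>Lebesgue measure on R^{|L_I|} x R^p (the D-part is restricted to (0,inf)^p below).\<close>
definition coord_measure :: "nat \<Rightarrow> (nat \<Rightarrow> nat \<Rightarrow> bool) \<Rightarrow> ((nat \<times> nat \<Rightarrow> real) \<times> (nat \<Rightarrow> real)) measure" where
  "coord_measure p E = (PiM (Lidx p E) (\<lambda>_. lborel)) \<Otimes>\<^sub>M (PiM {..<p} (\<lambda>_. lborel))"

definition Dpos :: "nat \<Rightarrow> ((nat \<times> nat \<Rightarrow> real) \<times> (nat \<Rightarrow> real)) set" where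
  "Dpos p = {(x, d). \<forall>k<p. 0 < d k}"

definition pos_def_mat :: "nat \<Rightarrow> (nat \<Rightarrow> nat \<Rightarrow> real) \<Rightarrow> bool" where
  "pos_def_mat p U \<longleftrightarrow> (\<forall>i<p. \<forall>j<p. U i j = U j i) \<and>
     (\<forall>v. (\<exists>i<p. v i \<noteq> 0) \<longrightarrow> 0 < (\<Sum>i<p. \<Sum>j<p. v i * U i j * v j))"

end

theory Submission
  imports Defs
begin


lemma pd_lower_bound:
  fixes U :: "nat \<Rightarrow> nat \<Rightarrow> real"
  assumes pd: "pos_def_mat p U"
  shows "\<exists>c>0. \<forall>v. c * (\<Sum>i<p. (v i)\<^sup>2) \<le> (\<Sum>i<p. \<Sum>j<p. v i * U i j * v j)"
proof (cases "p = 0")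
  case True then show ?thesis by (intro exI[of _ 1]) simp
next
  case False
  define q where "q = (\<lambda>v::nat\<Rightarrow>real. \<Sum>i<p. \<Sum>j<p. v i * U i j * v j)"
  define B where "B = Pi\<^sub>E UNIV (\<lambda>i::nat. if i < p then {-1..1::real} else {0})"
  define K where "K = B \<inter> {v. (\<Sum>i<p. (v i)\<^sup>2) = 1}"
  have "compactin (product_topology (\<lambda>i. euclidean) UNIV) B"
    unfolding B_def by (subst compactin_PiE) auto
  hence cB: "compact B" by (simp add: euclidean_product_topology)
  have contsq: "continuous_on UNIV (\<lambda>v::nat\<Rightarrow>real. \<Sum>i<p. (v i)\<^sup>2)"
    by (intro continuous_intros continuous_on_subset[OF continuous_on_product_coordinates] subset_UNIV)
  have "closed {v::nat\<Rightarrow>real. (\<Sum>i<p. (v i)\<^sup>2) = 1}"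
    using continuous_closed_preimage_constant[OF contsq closed_UNIV, of 1] by simp
  hence cK: "compact K" unfolding K_def using cB by (simp add: compact_Int_closed)
  define e0 where "e0 = (\<lambda>i::nat. if i = 0 then 1 else (0::real))"
  have "(\<Sum>i<p. (e0 i)\<^sup>2) = (\<Sum>i<p. if i = 0 then 1 else 0)"
    unfolding e0_def by (intro sum.cong) auto
  also have "\<dots> = 1" using False by (subst sum.delta) auto
  finally have "e0 \<in> K" unfolding K_def B_def using False by (auto simp: e0_def)
  hence Kne: "K \<noteq> {}" by auto
  have cq: "continuous_on K q" unfolding q_def
    by (intro continuous_intros continuous_on_subset[OF continuous_on_product_coordinates] subset_UNIV)
  obtain w where wK: "w \<in> K" and wmin: "\<And>y. y \<in> K \<Longrightarrow> q w \<le> q y"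
    using continuous_attains_inf[OF cK Kne cq] by blast
  have "\<exists>i<p. w i \<noteq> 0"
  proof (rule ccontr)
    assume "\<not> ?thesis"
    hence "(\<Sum>i<p. (w i)\<^sup>2) = 0" by simp
    thus False using wK unfolding K_def by simp
  qed
  hence mpos: "q w > 0" using pd unfolding pos_def_mat_def q_def by blast
  show ?thesis
  proof (intro exI[of _ "q w"] conjI allI mpos)
    fix v :: "nat \<Rightarrow> real"
    define s where "s = (\<Sum>i<p. (v i)\<^sup>2)"
    show "q w * (\<Sum>i<p. (v i)\<^sup>2) \<le> (\<Sum>i<p. \<Sum>j<p. v i * U i j * v j)"
    proof (cases "s = 0")
      case True
      hence "\<forall>i<p. v i = 0" unfolding s_def
        by (subst (asm) sum_nonneg_eq_0_iff) auto
      thus ?thesis by simp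
    next
      case s0: False
      have spos: "s > 0" using s0 unfolding s_def by (metis order_le_neq_trans sum_nonneg zero_le_power2)
      define r where "r = sqrt s"
      have rpos: "r > 0" using spos unfolding r_def by simp
      have r2: "r\<^sup>2 = s" using spos unfolding r_def by simp
      define u where "u = (\<lambda>i. if i < p then v i / r else 0)"
      have su: "(\<Sum>i<p. (u i)\<^sup>2) = 1"
      proof -
        have "(\<Sum>i<p. (u i)\<^sup>2) = (\<Sum>i<p. (v i)\<^sup>2 / r\<^sup>2)"
          unfolding u_def by (intro sum.cong) (auto simp: power_divide)
        also have "\<dots> = s / r\<^sup>2" unfolding s_def by (simp add: sum_divide_distrib)
        finally show ?thesis using r2 spos by simp
      qed
      have ub: "\<bar>u i\<bar> \<le> 1" if "i < p" for i
      proof -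
        have "(u i)\<^sup>2 \<le> (\<Sum>i<p. (u i)\<^sup>2)"
          using that by (intro member_le_sum) auto
        hence "(u i)\<^sup>2 \<le> 1\<^sup>2" using su by simp
        thus ?thesis using abs_le_square_iff[of "u i" 1] by simp
      qed
      have u0: "\<And>i. \<not> i < p \<Longrightarrow> u i = 0" by (simp add: u_def)
      have "u \<in> K" unfolding K_def B_def using ub su u0 by (auto simp: abs_le_iff)
      hence "q w \<le> q u" by (rule wmin)
      moreover have "q v = r\<^sup>2 * q u"
        unfolding q_def u_def
        using rpos by (simp add: sum_distrib_left power2_eq_square field_simps)
      ultimately have "q w * s \<le> q v" using r2 spos
        by (metis mult.commute mult_right_mono less_le)
      thus ?thesis unfolding q_def s_def by simp
    qed
  qed
qed



lemma nn_gauss0: "(\<integral>\<^sup>+ s. ennreal (exp (- s\<^sup>2)) \<partial>lborel) = ennreal (sqrt pi)"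
proof -
  have "has_bochner_integral lborel (\<lambda>x::real. exp (- x\<^sup>2) * x ^ (2 * 0)) (sqrt pi * (fact (2 * 0) / (2 ^ (2 * 0) * fact 0)))"
    using has_bochner_integral_even_function[OF gaussian_moment_even_pos[where k=0]] by simp
  hence h: "has_bochner_integral lborel (\<lambda>x::real. exp (- x\<^sup>2)) (sqrt pi)" by simp
  show ?thesis
    using h by (subst nn_integral_eq_integrable) (auto simp: has_bochner_integral_iff)
qed

lemma nn_gauss:
  fixes a :: real assumes a: "a > 0"
  shows "(\<integral>\<^sup>+ t. ennreal (exp (- a * t\<^sup>2)) \<partial>lborel) = ennreal (sqrt pi / sqrt a)"
proof -
  have sa: "sqrt a > 0" using a by simp
  have "(\<integral>\<^sup>+ t. ennreal (exp (- a * t\<^sup>2)) \<partial>lborel)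
      = \<bar>1 / sqrt a\<bar> * (\<integral>\<^sup>+ s. ennreal (exp (- a * (0 + 1 / sqrt a * s)\<^sup>2)) \<partial>lborel)"
    by (rule nn_integral_real_affine) (use sa in auto)
  also have "(\<lambda>s. ennreal (exp (- a * (0 + 1 / sqrt a * s)\<^sup>2))) = (\<lambda>s. ennreal (exp (- s\<^sup>2)))"
    using a by (auto simp: fun_eq_iff power_divide)
  also have "\<bar>1 / sqrt a\<bar> * (\<integral>\<^sup>+ s. ennreal (exp (- s\<^sup>2)) \<partial>lborel) = ennreal (1 / sqrt a) * ennreal (sqrt pi)"
    using sa by (simp add: nn_gauss0)
  also have "\<dots> = ennreal (sqrt pi / sqrt a)" using sa by (simp add: ennreal_mult'[symmetric])
  finally show ?thesis .
qed

lemma nn_gamma_finite: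
  fixes b c :: real assumes b: "b > -1" and c: "c > 0"
  shows "(\<integral>\<^sup>+ t. ennreal (indicator {0<..} t * t powr b * exp (- c * t)) \<partial>lborel) < \<infinity>"
proof -
  have "(\<integral>\<^sup>+ t. ennreal (indicator {0<..} t * t powr b * exp (- c * t)) \<partial>lborel)
      = \<bar>1 / c\<bar> * (\<integral>\<^sup>+ s. ennreal (indicator {0<..} (0 + 1 / c * s) * (0 + 1 / c * s) powr b * exp (- c * (0 + 1 / c * s))) \<partial>lborel)"
    by (rule nn_integral_real_affine) (use c in auto)
  also have "\<dots> \<le> ennreal (1 / c) * (\<integral>\<^sup>+ s. ennreal (c powr (- b)) * ennreal (indicator {0..} s * s powr (b + 1 - 1) / exp s) \<partial>lborel)"
  proof (intro mult_mono nn_integral_mono)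
    fix s :: real
    show "ennreal (indicator {0<..} (0 + 1 / c * s) * (0 + 1 / c * s) powr b * exp (- c * (0 + 1 / c * s)))
        \<le> ennreal (c powr (- b)) * ennreal (indicator {0..} s * s powr (b + 1 - 1) / exp s)"
    proof (cases "s > 0")
      case True
      have "(s / c) powr b = s powr b * c powr (- b)"
        using True c by (simp add: powr_divide powr_minus_divide)
      thus ?thesis using True c
        by (simp add: ennreal_mult'[symmetric] exp_minus field_simps)
    next
      case False
      thus ?thesis using c by (simp add: indicator_def zero_less_divide_iff)
    qed
  qed (use c in auto)
  also have "\<dots> = ennreal (1 / c) * (ennreal (c powr (- b)) * ennreal (Gamma (b + 1)))"
    using b by (subst nn_integral_cmult) (auto simp: Gamma_conv_nn_integral_real)
  also have "\<dots> < \<infinity>" by (simp add: ennreal_mult_less_top)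
  finally show ?thesis .
qed



lemma sum_I:
  fixes g :: "nat \<times> nat \<Rightarrow> 'b::comm_monoid_add" and p :: nat and A :: "nat \<Rightarrow> nat set"
  assumes fin: "\<And>k. finite (A k)" and aI: "I = {(i,k). k<p \<and> i \<in> A k}"
  shows "(\<Sum>ik\<in>I. g ik) = (\<Sum>k<p. \<Sum>i\<in>A k. g (i,k))"
proof -
  have "I = prod.swap ` (SIGMA k:{..<p}. A k)" unfolding aI by force
  hence "(\<Sum>ik\<in>I. g ik) = (\<Sum>ik\<in>(SIGMA k:{..<p}. A k). g (prod.swap ik))"
    by (simp add: sum.reindex)
  also have "\<dots> = (\<Sum>k<p. \<Sum>i\<in>A k. g (i,k))"
    using fin by (subst sum.Sigma) (auto simp: case_prod_unfold prod.swap_def)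
  finally show ?thesis .
qed

lemma prod_I:
  fixes g :: "nat \<times> nat \<Rightarrow> 'b::comm_monoid_mult" and p :: nat and A :: "nat \<Rightarrow> nat set"
  assumes fin: "\<And>k. finite (A k)" and aI: "I = {(i,k). k<p \<and> i \<in> A k}"
  shows "(\<Prod>ik\<in>I. g ik) = (\<Prod>k<p. \<Prod>i\<in>A k. g (i,k))"
proof -
  have "I = prod.swap ` (SIGMA k:{..<p}. A k)" unfolding aI by force
  hence "(\<Prod>ik\<in>I. g ik) = (\<Prod>ik\<in>(SIGMA k:{..<p}. A k). g (prod.swap ik))"
    by (simp add: prod.reindex)
  also have "\<dots> = (\<Prod>k<p. \<Prod>i\<in>A k. g (i,k))"
    using fin by (subst prod.Sigma) (auto simp: case_prod_unfold prod.swap_def)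
  finally show ?thesis .
qed

lemma finite_I:
  fixes p :: nat and A :: "nat \<Rightarrow> nat set"
  assumes fin: "\<And>k. finite (A k)" and aI: "I = {(i,k). k<p \<and> i \<in> A k}"
  shows "finite I"
proof -
  have "I = prod.swap ` (SIGMA k:{..<p}. A k)" unfolding aI by force
  moreover have "finite (SIGMA k:{..<p}. A k)" using fin by (intro finite_SigmaI) auto
  ultimately show ?thesis by simp
qed

lemma psf_lborel: "product_sigma_finite (\<lambda>_::'i. lborel)"
  by unfold_locales



lemma h_integral_finite:
  fixes a c :: real and n :: nat
  assumes c: "c > 0" and ab: "a - real n / 2 > -1"
  shows "(\<integral>\<^sup>+ t. ennreal (indicator {0<..} t * (t powr a * exp (- c * t)) * (sqrt pi / sqrt (c * t)) ^ n) \<partial>lborel) < \<infinity>"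
proof -
  have eq: "ennreal (indicator {0<..} t * (t powr a * exp (- c * t)) * (sqrt pi / sqrt (c * t)) ^ n)
     = ennreal ((sqrt pi / sqrt c) ^ n) * ennreal (indicator {0<..} t * t powr (a - real n / 2) * exp (- c * t))" for t
  proof (cases "t > 0")
    case True
    have "sqrt t ^ n = t powr (real n / 2)"
      using True by (simp add: powr_half_sqrt[symmetric] powr_powr[symmetric] powr_realpow[symmetric] powr_powr)
    hence "(sqrt pi / sqrt (c * t)) ^ n = (sqrt pi / sqrt c) ^ n / t powr (real n / 2)"
      by (simp add: real_sqrt_mult power_divide power_mult_distrib)
    moreover have "t powr (a - real n / 2) = t powr a / t powr (real n / 2)"
      using True by (simp add: powr_diff)
    ultimately show ?thesis using True c
      by (simp add: ennreal_mult'[symmetric] field_simps)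
  qed simp
  show ?thesis
    unfolding eq using nn_gamma_finite[OF ab c]
    by (subst nn_integral_cmult) (auto simp: ennreal_mult_less_top)
qed


lemma meas_fst_sq:
  assumes "ik \<in> I"
  shows "(\<lambda>x. (fst x ik)\<^sup>2 :: real) \<in> borel_measurable (Pi\<^sub>M I (\<lambda>_. lborel) \<Otimes>\<^sub>M N)"
proof -
  have "(\<lambda>x. fst x ik :: real) \<in> borel_measurable (Pi\<^sub>M I (\<lambda>_. lborel) \<Otimes>\<^sub>M N)"
    using assms by measurable
  thus ?thesis by measurable
qed


lemma core_finite:
  fixes p :: nat and A :: "nat \<Rightarrow> nat set" and a :: "nat \<Rightarrow> real" and c :: real
    and I :: "(nat \<times> nat) set"
  assumes fin: "\<And>k. finite (A k)" and aI: "I = {(i,k). k<p \<and> i \<in> A k}" and c: "c > 0"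
    and ab: "\<And>k. k < p \<Longrightarrow> a k - real (card (A k)) / 2 > -1"
  shows "(\<integral>\<^sup>+ z. ennreal ((\<Prod>k<p. snd z k powr a k) *
            exp (- c * (\<Sum>k<p. snd z k * (1 + (\<Sum>i\<in>A k. (fst z (i,k))\<^sup>2))))) * indicator (Dpos p) z
          \<partial>(Pi\<^sub>M I (\<lambda>_. lborel) \<Otimes>\<^sub>M Pi\<^sub>M {..<p} (\<lambda>_. lborel))) < \<infinity>"
proof -
  define M1 where "M1 = Pi\<^sub>M I (\<lambda>_::nat\<times>nat. lborel :: real measure)"
  define M2 where "M2 = Pi\<^sub>M {..<p} (\<lambda>_::nat. lborel :: real measure)"
  have finI: "finite I" using finite_I[OF fin aI] .
  interpret P1: product_sigma_finite "\<lambda>_::nat\<times>nat. lborel :: real measure" by (rule psf_lborel)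
  interpret P2: product_sigma_finite "\<lambda>_::nat. lborel :: real measure" by (rule psf_lborel)
  interpret S1: sigma_finite_measure M1 unfolding M1_def by (rule P1.sigma_finite[OF finI])
  interpret S2: sigma_finite_measure M2 unfolding M2_def by (rule P2.sigma_finite) simp
  interpret PS: pair_sigma_finite M1 M2 by unfold_locales
  define Pd where "Pd = (\<lambda>d::nat\<Rightarrow>real. \<Prod>k<p. ennreal (indicator {0<..} (d k) * (d k powr a k * exp (- c * d k))))"
  define Ax where "Ax = (\<lambda>(x::nat\<times>nat\<Rightarrow>real) (d::nat\<Rightarrow>real). \<Prod>ik\<in>I. ennreal (exp (- c * d (snd ik) * (x ik)\<^sup>2)))"
  define h where "h = (\<lambda>k t. ennreal (indicator {0<..} t * (t powr a k * exp (- c * t)) * (sqrt pi / sqrt (c * t)) ^ card (A k)))"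
  have step1: "ennreal ((\<Prod>k<p. d k powr a k) *
            exp (- c * (\<Sum>k<p. d k * (1 + (\<Sum>i\<in>A k. (x (i,k))\<^sup>2))))) * indicator (Dpos p) (x, d)
        = Pd d * Ax x d" for x d
  proof (cases "\<forall>k<p. 0 < d k")
    case True
    have "- c * (\<Sum>k<p. d k * (1 + (\<Sum>i\<in>A k. (x (i,k))\<^sup>2)))
        = (\<Sum>k<p. - c * d k) + (\<Sum>k<p. \<Sum>i\<in>A k. - c * d k * (x (i,k))\<^sup>2)"
      by (simp add: sum_distrib_left distrib_left sum.distrib algebra_simps)
    also have "(\<Sum>k<p. \<Sum>i\<in>A k. - c * d k * (x (i,k))\<^sup>2) = (\<Sum>ik\<in>I. - c * d (snd ik) * (x ik)\<^sup>2)"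
      by (subst sum_I[OF fin aI]) simp
    finally have "exp (- c * (\<Sum>k<p. d k * (1 + (\<Sum>i\<in>A k. (x (i,k))\<^sup>2))))
        = (\<Prod>k<p. exp (- c * d k)) * (\<Prod>ik\<in>I. exp (- c * d (snd ik) * (x ik)\<^sup>2))"
      by (simp add: exp_add exp_sum finI)
    hence "(\<Prod>k<p. d k powr a k) * exp (- c * (\<Sum>k<p. d k * (1 + (\<Sum>i\<in>A k. (x (i,k))\<^sup>2))))
        = (\<Prod>k<p. indicator {0<..} (d k) * (d k powr a k * exp (- c * d k))) * (\<Prod>ik\<in>I. exp (- c * d (snd ik) * (x ik)\<^sup>2))"
      using True by (simp add: prod.distrib)
    moreover have "indicator (Dpos p) (x, d) = (1::ennreal)" using True by (simp add: Dpos_def)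
    moreover have "Pd d = ennreal (\<Prod>k<p. indicator {0<..} (d k) * (d k powr a k * exp (- c * d k)))"
      unfolding Pd_def by (rule prod_ennreal) (auto simp: indicator_def)
    moreover have "Ax x d = ennreal (\<Prod>ik\<in>I. exp (- c * d (snd ik) * (x ik)\<^sup>2))"
      unfolding Ax_def by (rule prod_ennreal) simp
    moreover have "(\<Prod>k<p. indicator {0<..} (d k) * (d k powr a k * exp (- c * d k))) \<ge> (0::real)"
      by (intro prod_nonneg) (auto simp: indicator_def)
    ultimately show ?thesis
      by (simp only: ennreal_mult[symmetric] prod_nonneg exp_ge_zero mult_1_right)
  next
    case False
    then obtain k where "k < p" "\<not> 0 < d k" by auto
    hence "Pd d = 0" unfolding Pd_def by (auto intro!: bexI[of _ k])
    moreover have "indicator (Dpos p) (x, d) = (0::ennreal)" using False by (auto simp: Dpos_def)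
    ultimately show ?thesis by simp
  qed
  have snd_I[simp]: "\<And>ik. ik \<in> I \<Longrightarrow> snd ik \<in> {..<p}" unfolding aI by auto
  have meas: "(\<lambda>z. Pd (snd z) * Ax (fst z) (snd z)) \<in> borel_measurable (M1 \<Otimes>\<^sub>M M2)"
    unfolding Pd_def Ax_def M1_def M2_def
    apply measurable
     apply (auto simp: aI)[1]
    subgoal premises prems for ik
      by (rule meas_fst_sq[OF prems])
    done
  have measAx: "(\<lambda>x. Ax x d) \<in> borel_measurable M1" for d
    unfolding Ax_def M1_def by measurable
  have meash: "h k \<in> borel_measurable borel" for k
    unfolding h_def by measurable
  have step4: "Pd d * (\<integral>\<^sup>+ x. Ax x d \<partial>M1) = (\<Prod>k<p. h k (d k))" for d
  proof (cases "\<forall>k<p. 0 < d k")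
    case True
    have "(\<integral>\<^sup>+ x. Ax x d \<partial>M1) = (\<Prod>ik\<in>I. \<integral>\<^sup>+ t. ennreal (exp (- c * d (snd ik) * t\<^sup>2)) \<partial>lborel)"
      unfolding Ax_def M1_def by (rule P1.product_nn_integral_prod[OF finI]) measurable
    also have "\<dots> = (\<Prod>ik\<in>I. ennreal (sqrt pi / sqrt (c * d (snd ik))))"
    proof (intro prod.cong refl)
      fix ik assume "ik \<in> I"
      hence "snd ik < p" unfolding aI by auto
      hence pos: "c * d (snd ik) > 0" using True c by simp
      have "(\<lambda>t. ennreal (exp (- c * d (snd ik) * t\<^sup>2))) = (\<lambda>t. ennreal (exp (- (c * d (snd ik)) * t\<^sup>2)))"
        by simp
      thus "(\<integral>\<^sup>+ t. ennreal (exp (- c * d (snd ik) * t\<^sup>2)) \<partial>lborel) = ennreal (sqrt pi / sqrt (c * d (snd ik)))"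
        using nn_gauss[OF pos] by simp
    qed
    also have "\<dots> = (\<Prod>k<p. \<Prod>i\<in>A k. ennreal (sqrt pi / sqrt (c * d k)))"
      by (subst prod_I[OF fin aI]) simp
    also have "\<dots> = (\<Prod>k<p. ennreal (sqrt pi / sqrt (c * d k)) ^ card (A k))"
      by simp
    finally have "Pd d * (\<integral>\<^sup>+ x. Ax x d \<partial>M1) = (\<Prod>k<p. ennreal (indicator {0<..} (d k) * (d k powr a k * exp (- c * d k))) * ennreal (sqrt pi / sqrt (c * d k)) ^ card (A k))"
      unfolding Pd_def by (simp add: prod.distrib)
    also have "\<dots> = (\<Prod>k<p. h k (d k))"
    proof (intro prod.cong refl)
      fix k assume "k \<in> {..<p}"
      hence "d k > 0" using True by simp
      thus "ennreal (indicator {0<..} (d k) * (d k powr a k * exp (- c * d k))) * ennreal (sqrt pi / sqrt (c * d k)) ^ card (A k) = h k (d k)"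
        unfolding h_def using c by (simp add: ennreal_power ennreal_mult)
    qed
    finally show ?thesis .
  next
    case False
    then obtain k where k: "k < p" "\<not> 0 < d k" by auto
    hence "Pd d = 0" unfolding Pd_def by (auto intro!: bexI[of _ k])
    moreover have "(\<Prod>k<p. h k (d k)) = 0" using k unfolding h_def by (auto intro!: bexI[of _ k])
    ultimately show ?thesis by simp
  qed
  have "(\<integral>\<^sup>+ z. ennreal ((\<Prod>k<p. snd z k powr a k) *
            exp (- c * (\<Sum>k<p. snd z k * (1 + (\<Sum>i\<in>A k. (fst z (i,k))\<^sup>2))))) * indicator (Dpos p) z
          \<partial>(M1 \<Otimes>\<^sub>M M2)) = (\<integral>\<^sup>+ z. Pd (snd z) * Ax (fst z) (snd z) \<partial>(M1 \<Otimes>\<^sub>M M2))"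
    proof (intro nn_integral_cong)
    fix z :: "(nat \<times> nat \<Rightarrow> real) \<times> (nat \<Rightarrow> real)"
    show "ennreal ((\<Prod>k<p. snd z k powr a k) *
            exp (- c * (\<Sum>k<p. snd z k * (1 + (\<Sum>i\<in>A k. (fst z (i,k))\<^sup>2))))) * indicator (Dpos p) z
          = Pd (snd z) * Ax (fst z) (snd z)"
      using step1[of "snd z" "fst z"] by simp
  qed
  also have "\<dots> = (\<integral>\<^sup>+ d. \<integral>\<^sup>+ x. Pd d * Ax x d \<partial>M1 \<partial>M2)"
    using PS.nn_integral_snd[OF meas] by simp
  also have "\<dots> = (\<integral>\<^sup>+ d. Pd d * (\<integral>\<^sup>+ x. Ax x d \<partial>M1) \<partial>M2)"
    by (intro nn_integral_cong nn_integral_cmult measAx)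
  also have "\<dots> = (\<integral>\<^sup>+ d. (\<Prod>k<p. h k (d k)) \<partial>M2)"
    by (intro nn_integral_cong) (rule step4)
  also have "\<dots> = (\<Prod>k<p. integral\<^sup>N lborel (h k))"
    unfolding M2_def by (rule P2.product_nn_integral_prod) (simp_all add: meash)
  also have "\<dots> < \<infinity>"
  proof -
    have "\<forall>k\<in>{..<p}. integral\<^sup>N lborel (h k) \<noteq> \<top>"
    proof
      fix k assume "k \<in> {..<p}"
      hence abk: "a k - real (card (A k)) / 2 > -1" using ab by simp
      have "integral\<^sup>N lborel (h k) < \<top>" unfolding h_def
        using h_integral_finite[OF c abk] by simp
      thus "integral\<^sup>N lborel (h k) \<noteq> \<top>" by simp
    qed
    hence "(\<Prod>k<p. integral\<^sup>N lborel (h k)) \<noteq> \<top>" by (simp add: ennreal_prod_eq_top)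
    thus ?thesis by (simp add: less_top)
  qed
  finally show ?thesis unfolding M1_def M2_def .
qed



lemma Lfull_diag[simp]: "Lfull E x d i i = 1"
  by (subst Lfull.simps) simp

lemma Lfull_upper[simp]: "i < k \<Longrightarrow> Lfull E x d i k = 0"
  by (subst Lfull.simps) simp

lemma Lfull_edge: "k < i \<Longrightarrow> E i k \<Longrightarrow> Lfull E x d i k = x (i, k)"
  by (subst Lfull.simps) simp

lemma Omega_alt:
  assumes "i < p" "j < p"
  shows "(\<Sum>k\<le>min i j. Lfull E x d i k * Lfull E x d j k * d k) = (\<Sum>k<p. Lfull E x d i k * Lfull E x d j k * d k)"
proof (rule sum.mono_neutral_left)
  show "{..min i j} \<subseteq> {..<p}" using assms by auto
  show "\<forall>k\<in>{..<p} - {..min i j}. Lfull E x d i k * Lfull E x d j k * d k = 0"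
    by (auto simp: min_def split: if_splits)
qed simp

lemma trace_alt:
  fixes a :: "nat \<Rightarrow> nat \<Rightarrow> real"
  shows "(\<Sum>i<p. \<Sum>j<p. U i j * (\<Sum>k<p. a i k * a j k * d k))
       = (\<Sum>k<p. d k * (\<Sum>i<p. \<Sum>j<p. a i k * U i j * a j k))"
proof -
  have "(\<Sum>i<p. \<Sum>j<p. U i j * (\<Sum>k<p. a i k * a j k * d k))
      = (\<Sum>i<p. \<Sum>j<p. \<Sum>k<p. d k * (a i k * U i j * a j k))"
    by (simp add: sum_distrib_left algebra_simps)
  also have "\<dots> = (\<Sum>i<p. \<Sum>k<p. \<Sum>j<p. d k * (a i k * U i j * a j k))"
    by (intro sum.cong refl sum.swap)
  also have "\<dots> = (\<Sum>k<p. \<Sum>i<p. \<Sum>j<p. d k * (a i k * U i j * a j k))"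
    by (rule sum.swap)
  also have "\<dots> = (\<Sum>k<p. d k * (\<Sum>i<p. \<Sum>j<p. a i k * U i j * a j k))"
    by (simp add: sum_distrib_left)
  finally show ?thesis .
qed

lemma trace_lower:
  fixes a :: "nat \<Rightarrow> nat \<Rightarrow> real"
  assumes c: "\<forall>v. c * (\<Sum>i<p. (v i)\<^sup>2) \<le> (\<Sum>i<p. \<Sum>j<p. v i * U i j * v j)"
    and d: "\<forall>k<p. 0 \<le> d k"
  shows "c * (\<Sum>k<p. d k * (\<Sum>i<p. (a i k)\<^sup>2)) \<le> (\<Sum>i<p. \<Sum>j<p. U i j * (\<Sum>k<p. a i k * a j k * d k))"
proof -
  have "c * (\<Sum>k<p. d k * (\<Sum>i<p. (a i k)\<^sup>2)) = (\<Sum>k<p. d k * (c * (\<Sum>i<p. (a i k)\<^sup>2)))"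
    by (simp add: sum_distrib_left algebra_simps)
  also have "\<dots> \<le> (\<Sum>k<p. d k * (\<Sum>i<p. \<Sum>j<p. a i k * U i j * a j k))"
  proof (rule sum_mono)
    fix k assume "k \<in> {..<p}"
    thus "d k * (c * (\<Sum>i<p. (a i k)\<^sup>2)) \<le> d k * (\<Sum>i<p. \<Sum>j<p. a i k * U i j * a j k)"
      using c[rule_format, of "\<lambda>i. a i k"] d by (intro mult_left_mono) auto
  qed
  also have "\<dots> = (\<Sum>i<p. \<Sum>j<p. U i j * (\<Sum>k<p. a i k * a j k * d k))"
    by (rule trace_alt[symmetric])
  finally show ?thesis .
qed

lemma T_lower:
  assumes d: "\<forall>k<p. 0 \<le> d k"
  shows "(\<Sum>k<p. d k * (1 + (\<Sum>i\<in>{i. k < i \<and> i < p \<and> E i k}. (x (i,k))\<^sup>2)))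
      \<le> (\<Sum>k<p. d k * (\<Sum>i<p. (Lfull E x d i k)\<^sup>2))"
proof (rule sum_mono)
  fix k assume k: "k \<in> {..<p}"
  define Ak where "Ak = {i. k < i \<and> i < p \<and> E i k}"
  have finA: "finite Ak" unfolding Ak_def by auto
  have "1 + (\<Sum>i\<in>Ak. (x (i,k))\<^sup>2) = (\<Sum>i\<in>insert k Ak. (Lfull E x d i k)\<^sup>2)"
    using finA by (simp add: Ak_def Lfull_edge)
  also have "\<dots> \<le> (\<Sum>i<p. (Lfull E x d i k)\<^sup>2)"
    using k by (intro sum_mono2) (auto simp: Ak_def)
  finally show "d k * (1 + (\<Sum>i\<in>{i. k < i \<and> i < p \<and> E i k}. (x (i,k))\<^sup>2))
      \<le> d k * (\<Sum>i<p. (Lfull E x d i k)\<^sup>2)"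
    using d k unfolding Ak_def by (intro mult_left_mono) auto
qed

lemma Omega_bound:
  fixes a :: "nat \<Rightarrow> nat \<Rightarrow> real"
  assumes d: "\<forall>k<p. 0 \<le> d k" and ij: "i < p" "j < p"
  shows "\<bar>\<Sum>k<p. a i k * a j k * d k\<bar> \<le> (\<Sum>k<p. d k * (\<Sum>i<p. (a i k)\<^sup>2))"
proof -
  have "\<bar>\<Sum>k<p. a i k * a j k * d k\<bar> \<le> (\<Sum>k<p. \<bar>a i k * a j k * d k\<bar>)"
    by (rule sum_abs)
  also have "\<dots> \<le> (\<Sum>k<p. d k * (\<Sum>i<p. (a i k)\<^sup>2))"
  proof (rule sum_mono)
    fix k assume k: "k \<in> {..<p}"
    have s1: "(a i k)\<^sup>2 \<le> (\<Sum>i<p. (a i k)\<^sup>2)" using ij by (intro member_le_sum) auto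
    have s2: "(a j k)\<^sup>2 \<le> (\<Sum>i<p. (a i k)\<^sup>2)" using ij by (intro member_le_sum) auto
    have "\<bar>a i k * a j k\<bar> \<le> ((a i k)\<^sup>2 + (a j k)\<^sup>2) / 2"
      using sum_squares_bound[of "\<bar>a i k\<bar>" "\<bar>a j k\<bar>"] by (simp add: abs_mult)
    also have "\<dots> \<le> (\<Sum>i<p. (a i k)\<^sup>2)" using s1 s2 by simp
    finally have "\<bar>a i k * a j k\<bar> \<le> (\<Sum>i<p. (a i k)\<^sup>2)" .
    thus "\<bar>a i k * a j k * d k\<bar> \<le> d k * (\<Sum>i<p. (a i k)\<^sup>2)"
      using d k by (simp add: abs_mult mult.commute mult_left_mono)
  qed
  finally show ?thesis .
qed



lemma meas_fst:
  assumes "ik \<in> I"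
  shows "(\<lambda>x. fst x ik :: real) \<in> borel_measurable (Pi\<^sub>M I (\<lambda>_. lborel) \<Otimes>\<^sub>M N)"
  using assms by measurable

lemma meas_snd:
  assumes "k \<in> K"
  shows "(\<lambda>x. snd x k :: real) \<in> borel_measurable (N \<Otimes>\<^sub>M Pi\<^sub>M K (\<lambda>_. lborel))"
  using assms by measurable

lemma meas_Lfull:
  assumes graph: "\<forall>i j. E i j \<longrightarrow> i < p \<and> j < p \<and> i \<noteq> j"
  shows "i < p \<Longrightarrow> (\<lambda>z. Lfull E (fst z) (snd z) i j) \<in> borel_measurable (coord_measure p E)"
proof (induction j arbitrary: i rule: less_induct)
  case (less j)
  show ?case
  proof (cases "i \<le> j")
    case True
    hence "(\<lambda>z. Lfull E (fst z) (snd z) i j) = (\<lambda>z. if i = j then 1 else 0)"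
      by (auto simp: le_less)
    thus ?thesis by simp
  next
    case False
    show ?thesis
    proof (cases "E i j")
      case True
      hence "(\<lambda>z. Lfull E (fst z) (snd z) i j) = (\<lambda>z. fst z (i, j))"
        using False by (auto simp: Lfull_edge)
      moreover have "(i, j) \<in> Lidx p E" using True False less.prems by (auto simp: Lidx_def)
      ultimately show ?thesis unfolding coord_measure_def by (simp add: meas_fst)
    next
      case nE: False
      have jp: "j < p" using False less.prems by simp
      have "(\<lambda>z. Lfull E (fst z) (snd z) i j) = (\<lambda>z. - (\<Sum>k<j. Lfull E (fst z) (snd z) i k * Lfull E (fst z) (snd z) j k * snd z k) / snd z j)"
        using False nE by (intro ext, subst Lfull.simps) auto
      moreover have "(\<lambda>z. - (\<Sum>k<j. Lfull E (fst z) (snd z) i k * Lfull E (fst z) (snd z) j k * snd z k) / snd z j) \<in> borel_measurable (coord_measure p E)"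
      proof (intro borel_measurable_divide borel_measurable_uminus borel_measurable_sum borel_measurable_times)
        fix k assume "k \<in> {..<j}"
        hence k: "k < j" by simp
        show "(\<lambda>z. Lfull E (fst z) (snd z) i k) \<in> borel_measurable (coord_measure p E)"
          using less.IH[OF k less.prems] .
        show "(\<lambda>z. Lfull E (fst z) (snd z) j k) \<in> borel_measurable (coord_measure p E)"
          using less.IH[OF k jp] .
        show "(\<lambda>z. snd z k) \<in> borel_measurable (coord_measure p E)"
          unfolding coord_measure_def using k jp by (intro meas_snd) simp
      next
        show "(\<lambda>z. snd z j) \<in> borel_measurable (coord_measure p E)"
          unfolding coord_measure_def using jp by (intro meas_snd) simp
      qed
      ultimately show ?thesis by simp
    qed
  qed
qed



lemma finite_Lidx: "finite (Lidx p E)"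
proof (rule finite_subset)
  show "Lidx p E \<subseteq> {..<p} \<times> {..<p}" by (auto simp: Lidx_def)
qed simp

lemma space_coord: "space (coord_measure p E) = (Pi\<^sub>E (Lidx p E) (\<lambda>_. UNIV)) \<times> (Pi\<^sub>E {..<p} (\<lambda>_. UNIV))"
  unfolding coord_measure_def by (simp add: space_pair_measure space_PiM)

lemma Dpos_sets: "Dpos p \<inter> space (coord_measure p E) \<in> sets (coord_measure p E)"
proof -
  have "Dpos p \<inter> space (coord_measure p E) = (Pi\<^sub>E (Lidx p E) (\<lambda>_. UNIV)) \<times> (Pi\<^sub>E {..<p} (\<lambda>_. {0<..}))"
    unfolding space_coord Dpos_def by (auto simp: PiE_def Pi_def)
  moreover have "(Pi\<^sub>E (Lidx p E) (\<lambda>_. UNIV)) \<times> (Pi\<^sub>E {..<p} (\<lambda>_. {0::real<..})) \<in> sets (coord_measure p E)"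
    unfolding coord_measure_def
    by (intro pair_measureI sets_PiM_I_finite) (auto simp: finite_Lidx)
  ultimately show ?thesis by simp
qed

lemma Dpos_ind_meas: "(indicator (Dpos p) :: _ \<Rightarrow> ennreal) \<in> borel_measurable (coord_measure p E)"
  using Dpos_sets by (simp add: borel_measurable_indicator_iff)

lemma Dpos_emeasure_pos: "emeasure (coord_measure p E) (Dpos p \<inter> space (coord_measure p E)) \<noteq> 0"
proof -
  interpret P1: product_sigma_finite "\<lambda>_::nat\<times>nat. lborel :: real measure" by (rule psf_lborel)
  interpret P2: product_sigma_finite "\<lambda>_::nat. lborel :: real measure" by (rule psf_lborel)
  have finL: "finite (Lidx p E)"
  proof (rule finite_subset)
    show "Lidx p E \<subseteq> {..<p} \<times> {..<p}" by (auto simp: Lidx_def)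
  qed simp
  interpret S2: sigma_finite_measure "Pi\<^sub>M {..<p} (\<lambda>_::nat. lborel :: real measure)" by (rule P2.sigma_finite) simp
  define B where "B = (Pi\<^sub>E (Lidx p E) (\<lambda>_. UNIV :: real set)) \<times> (Pi\<^sub>E {..<p} (\<lambda>_. {0<..<1::real}))"
  have Bs: "B \<in> sets (coord_measure p E)" unfolding B_def coord_measure_def
    by (intro pair_measureI sets_PiM_I_finite) (auto simp: finL)
  have "B \<subseteq> Dpos p \<inter> space (coord_measure p E)"
    unfolding B_def space_coord Dpos_def by (auto simp: PiE_def Pi_def)
  hence le: "emeasure (coord_measure p E) B \<le> emeasure (coord_measure p E) (Dpos p \<inter> space (coord_measure p E))"
    using Dpos_sets by (intro emeasure_mono) auto
  have "emeasure (coord_measure p E) B = emeasure (Pi\<^sub>M (Lidx p E) (\<lambda>_. lborel :: real measure)) (Pi\<^sub>E (Lidx p E) (\<lambda>_. UNIV))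
      * emeasure (Pi\<^sub>M {..<p} (\<lambda>_. lborel)) (Pi\<^sub>E {..<p} (\<lambda>_. {0<..<1::real}))"
    unfolding B_def coord_measure_def
    by (subst S2.emeasure_pair_measure_Times) (auto intro!: sets_PiM_I_finite simp: finL)
  also have "\<dots> = (\<Prod>i\<in>Lidx p E. emeasure lborel (UNIV :: real set)) * (\<Prod>i<p. emeasure lborel {0<..<1::real})"
    by (subst P1.emeasure_PiM[OF finL], simp, subst P2.emeasure_PiM, simp_all)
  also have "\<dots> \<noteq> 0" using finL by simp
  finally show ?thesis using le by (auto simp: le_zero_eq)
qed



lemma texp_bound:
  fixes t c :: real assumes t: "t \<ge> 0" and c: "c > 0"
  shows "t * exp (- (c/2) * t) \<le> (4/c) * exp (- (c/4) * t)"
proof -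
  define s where "s = c * t / 4"
  have "s \<le> exp s" using exp_ge_add_one_self[of s] by linarith
  hence "t \<le> (4/c) * exp s" using c unfolding s_def by (simp add: field_simps)
  hence "t * exp (- (c/2) * t) \<le> (4/c) * exp s * exp (- (c/2) * t)"
    by (intro mult_right_mono) auto
  also have "\<dots> = (4/c) * exp (- (c/4) * t)"
    unfolding s_def by (simp add: mult.assoc exp_add[symmetric] field_simps)
  finally show ?thesis .
qed

lemma m_snd: "k < p \<Longrightarrow> (\<lambda>z. snd z k :: real) \<in> borel_measurable (coord_measure p E)"
  unfolding coord_measure_def by (intro meas_snd) simp

lemma m_fst: "ik \<in> Lidx p E \<Longrightarrow> (\<lambda>z. fst z ik :: real) \<in> borel_measurable (coord_measure p E)"
  unfolding coord_measure_def by (intro meas_fst)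



theorem theorem1:
  fixes p :: nat and E :: "nat \<Rightarrow> nat \<Rightarrow> bool"
    and U :: "nat \<Rightarrow> nat \<Rightarrow> real" and \<delta> :: "nat \<Rightarrow> real"
  assumes graph: "\<forall>i j. E i j \<longrightarrow> i < p \<and> j < p \<and> i \<noteq> j"
    and sym: "\<forall>i j. E i j \<longrightarrow> E j i"
    and U_pd: "pos_def_mat p U"
    and delta_pos: "\<forall>i<p. 0 < \<delta> i"
  shows "(\<integral>\<^sup>+ z. ennreal (pistar p E U \<delta> (fst z) (snd z)) * indicator (Dpos p) z
            \<partial>coord_measure p E) < \<infinity>
    \<and> 0 < (\<integral>\<^sup>+ z. ennreal (pistar p E U \<delta> (fst z) (snd z)) * indicator (Dpos p) z
            \<partial>coord_measure p E)
    \<and> (\<forall>i<p. \<forall>j<p.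
         (\<integral>\<^sup>+ z. ennreal (\<bar>Omega E (fst z) (snd z) i j\<bar> * pistar p E U \<delta> (fst z) (snd z))
            * indicator (Dpos p) z \<partial>coord_measure p E) < \<infinity>)"
proof -
  obtain c where c: "c > 0" and cU: "\<forall>v. c * (\<Sum>i<p. (v i)\<^sup>2) \<le> (\<Sum>i<p. \<Sum>j<p. v i * U i j * v j)"
    using pd_lower_bound[OF U_pd] by blast
  define A where "A = (\<lambda>k. {i. k < i \<and> i < p \<and> E i k})"
  define a where "a = (\<lambda>k. (\<delta> k + 2 * real (nu p E k)) / 2)"
  have finA: "\<And>k. finite (A k)" unfolding A_def by auto
  have aI: "Lidx p E = {(i,k). k<p \<and> i \<in> A k}" unfolding A_def Lidx_def by auto
  have nuA: "\<And>k. nu p E k = card (A k)" unfolding nu_def A_def by simp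
  have ab: "\<And>k. k < p \<Longrightarrow> a k - real (card (A k)) / 2 > -1"
    using delta_pos unfolding a_def nuA by (simp add: field_simps) (smt (verit) of_nat_0_le_iff)
  define P where "P = (\<lambda>d::nat\<Rightarrow>real. \<Prod>j<p. d j powr a j)"
  define tr where "tr = (\<lambda>x d. \<Sum>i<p. \<Sum>j<p. U i j * (\<Sum>k<p. Lfull E x d i k * Lfull E x d j k * d k))"
  define T where "T = (\<lambda>x d. \<Sum>k<p. d k * (\<Sum>i<p. (Lfull E x d i k)\<^sup>2))"
  define S where "S = (\<lambda>x (d::nat\<Rightarrow>real). \<Sum>k<p. d k * (1 + (\<Sum>i\<in>A k. (x (i,k))\<^sup>2)))"
  have P0: "P d \<ge> 0" for d unfolding P_def by (intro prod_nonneg) auto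
  have pistar_eq: "pistar p E U \<delta> x d = P d * exp (- (1/2) * tr x d)" for x d
  proof -
    have "(\<Sum>i<p. \<Sum>j<p. U i j * (\<Sum>k\<le>min i j. Lfull E x d i k * Lfull E x d j k * d k)) = tr x d"
      unfolding tr_def by (intro sum.cong refl) (simp del: Lfull.simps add: Omega_alt)
    thus ?thesis unfolding pistar_def P_def a_def by simp
  qed
  have core: "(\<integral>\<^sup>+ z. ennreal (P (snd z) * exp (- c' * S (fst z) (snd z))) * indicator (Dpos p) z
      \<partial>coord_measure p E) < \<infinity>" if "c' > 0" for c'
    using core_finite[OF finA aI that ab] unfolding coord_measure_def P_def S_def by simp
  have Sle: "S x d \<le> T x d" and S0: "0 \<le> S x d" and Tle: "c * T x d \<le> tr x d"
    if d: "\<forall>k<p. 0 < d k" for x d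
  proof -
    have d': "\<forall>k<p. 0 \<le> d k" using d by auto
    show "S x d \<le> T x d" unfolding S_def T_def A_def using T_lower[OF d'] by simp
    show "0 \<le> S x d" unfolding S_def using d'
      by (intro sum_nonneg mult_nonneg_nonneg add_nonneg_nonneg sum_nonneg) auto
    show "c * T x d \<le> tr x d" unfolding T_def tr_def by (rule trace_lower[OF cU d'])
  qed
  have T0: "0 \<le> T x d" if d: "\<forall>k<p. 0 < d k" for x d
    unfolding T_def using d by (intro sum_nonneg mult_nonneg_nonneg sum_nonneg) auto
  have Om: "\<bar>Omega E x d i j\<bar> \<le> T x d" if d: "\<forall>k<p. 0 < d k" and ij: "i < p" "j < p" for x d i j
  proof -
    have d': "\<forall>k<p. 0 \<le> d k" using d by auto
    show ?thesis unfolding Omega_def T_def Omega_alt[OF ij]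
      by (rule Omega_bound[OF d' ij])
  qed
  have bound1: "pistar p E U \<delta> x d \<le> P d * exp (- (c/2) * S x d)" if d: "\<forall>k<p. 0 < d k" for x d
  proof -
    have "c * S x d \<le> c * T x d" using Sle[OF d] c by simp
    hence "- (1/2) * tr x d \<le> - (c/2) * S x d" using Tle[of d x, OF d] by linarith
    thus ?thesis unfolding pistar_eq using P0 by (intro mult_left_mono) auto
  qed
  have bound2: "\<bar>Omega E x d i j\<bar> * pistar p E U \<delta> x d \<le> (4/c) * (P d * exp (- (c/4) * S x d))"
    if d: "\<forall>k<p. 0 < d k" and ij: "i < p" "j < p" for x d i j
  proof -
    have ps0: "pistar p E U \<delta> x d \<ge> 0" unfolding pistar_eq using P0 by simp
    have "\<bar>Omega E x d i j\<bar> * pistar p E U \<delta> x d \<le> T x d * (P d * exp (- (c/2) * T x d))"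
    proof (rule mult_mono)
      show "pistar p E U \<delta> x d \<le> P d * exp (- (c/2) * T x d)"
        unfolding pistar_eq using Tle[of d x, OF d] P0 by (intro mult_left_mono) auto
    qed (use Om[OF d ij] T0[OF d] ps0 in auto)
    also have "\<dots> = P d * (T x d * exp (- (c/2) * T x d))" by simp
    also have "\<dots> \<le> P d * ((4/c) * exp (- (c/4) * T x d))"
      using texp_bound[OF T0[OF d] c] P0 by (intro mult_left_mono) auto
    also have "\<dots> \<le> P d * ((4/c) * exp (- (c/4) * S x d))"
      using Sle[OF d] c P0 by (intro mult_left_mono) auto
    finally show ?thesis by (simp add: algebra_simps)
  qed
  have mS: "(\<lambda>z. S (fst z) (snd z)) \<in> borel_measurable (coord_measure p E)"
    unfolding S_def
    by (intro borel_measurable_sum borel_measurable_times borel_measurable_add borel_measurable_const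
        borel_measurable_power m_snd m_fst) (auto simp: aI)
  have mP: "(\<lambda>z. P (snd z)) \<in> borel_measurable (coord_measure p E)"
    unfolding P_def by (intro borel_measurable_prod powr_real_measurable m_snd borel_measurable_const) auto
  have mQ: "(\<lambda>z. ennreal (P (snd z) * exp (- c' * S (fst z) (snd z))) * indicator (Dpos p) z) \<in> borel_measurable (coord_measure p E)" for c'
  proof -
    have "(\<lambda>z. exp (- c' * S (fst z) (snd z))) \<in> borel_measurable (coord_measure p E)"
      using mS by measurable
    hence "(\<lambda>z. P (snd z) * exp (- c' * S (fst z) (snd z))) \<in> borel_measurable (coord_measure p E)"
      using mP by (intro borel_measurable_times)
    thus ?thesis using Dpos_ind_meas by measurable
  qed
  have part1: "(\<integral>\<^sup>+ z. ennreal (pistar p E U \<delta> (fst z) (snd z)) * indicator (Dpos p) z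
            \<partial>coord_measure p E) < \<infinity>"
  proof -
    have "(\<integral>\<^sup>+ z. ennreal (pistar p E U \<delta> (fst z) (snd z)) * indicator (Dpos p) z \<partial>coord_measure p E)
        \<le> (\<integral>\<^sup>+ z. ennreal (P (snd z) * exp (- (c/2) * S (fst z) (snd z))) * indicator (Dpos p) z \<partial>coord_measure p E)"
    proof (rule nn_integral_mono)
      fix z :: "(nat \<times> nat \<Rightarrow> real) \<times> (nat \<Rightarrow> real)"
      show "ennreal (pistar p E U \<delta> (fst z) (snd z)) * indicator (Dpos p) z
          \<le> ennreal (P (snd z) * exp (- (c/2) * S (fst z) (snd z))) * indicator (Dpos p) z"
      proof (cases "z \<in> Dpos p")
        case True
        then obtain x d where z: "z = (x,d)" and d: "\<forall>k<p. 0 < d k" by (cases z) (auto simp: Dpos_def)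
        show ?thesis using True bound1[OF d] unfolding z by (simp add: ennreal_leI)
      qed simp
    qed
    also have "\<dots> < \<infinity>" using core[of "c/2"] c by simp
    finally show ?thesis .
  qed
  have part3: "(\<integral>\<^sup>+ z. ennreal (\<bar>Omega E (fst z) (snd z) i j\<bar> * pistar p E U \<delta> (fst z) (snd z))
            * indicator (Dpos p) z \<partial>coord_measure p E) < \<infinity>" if ij: "i < p" "j < p" for i j
  proof -
    have "(\<integral>\<^sup>+ z. ennreal (\<bar>Omega E (fst z) (snd z) i j\<bar> * pistar p E U \<delta> (fst z) (snd z))
            * indicator (Dpos p) z \<partial>coord_measure p E)
        \<le> (\<integral>\<^sup>+ z. ennreal (4/c) * (ennreal (P (snd z) * exp (- (c/4) * S (fst z) (snd z))) * indicator (Dpos p) z) \<partial>coord_measure p E)"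
    proof (rule nn_integral_mono)
      fix z :: "(nat \<times> nat \<Rightarrow> real) \<times> (nat \<Rightarrow> real)"
      show "ennreal (\<bar>Omega E (fst z) (snd z) i j\<bar> * pistar p E U \<delta> (fst z) (snd z)) * indicator (Dpos p) z
          \<le> ennreal (4/c) * (ennreal (P (snd z) * exp (- (c/4) * S (fst z) (snd z))) * indicator (Dpos p) z)"
      proof (cases "z \<in> Dpos p")
        case True
        then obtain x d where z: "z = (x,d)" and d: "\<forall>k<p. 0 < d k" by (cases z) (auto simp: Dpos_def)
        have "ennreal (\<bar>Omega E x d i j\<bar> * pistar p E U \<delta> x d) \<le> ennreal ((4/c) * (P d * exp (- (c/4) * S x d)))"
          using bound2[OF d ij] by (rule ennreal_leI)
        also have "\<dots> = ennreal (4/c) * ennreal (P d * exp (- (c/4) * S x d))"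
          by (rule ennreal_mult) (use c P0[of d] in auto)
        finally show ?thesis using True unfolding z by simp
      qed simp
    qed
    also have "\<dots> = ennreal (4/c) * (\<integral>\<^sup>+ z. ennreal (P (snd z) * exp (- (c/4) * S (fst z) (snd z))) * indicator (Dpos p) z \<partial>coord_measure p E)"
      by (rule nn_integral_cmult[OF mQ])
    also have "\<dots> < \<infinity>" using core[of "c/4"] c by (simp add: ennreal_mult_less_top)
    finally show ?thesis .
  qed
  have mtr: "(\<lambda>z. tr (fst z) (snd z)) \<in> borel_measurable (coord_measure p E)"
    unfolding tr_def
    by (intro borel_measurable_sum borel_measurable_times borel_measurable_const
        meas_Lfull[OF graph] m_snd) auto
  have mpi: "(\<lambda>z. ennreal (pistar p E U \<delta> (fst z) (snd z)) * indicator (Dpos p) z) \<in> borel_measurable (coord_measure p E)"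
  proof -
    have "(\<lambda>z. exp (- (1/2) * tr (fst z) (snd z))) \<in> borel_measurable (coord_measure p E)"
      using mtr by measurable
    hence "(\<lambda>z. P (snd z) * exp (- (1/2) * tr (fst z) (snd z))) \<in> borel_measurable (coord_measure p E)"
      using mP by (intro borel_measurable_times)
    hence "(\<lambda>z. pistar p E U \<delta> (fst z) (snd z)) \<in> borel_measurable (coord_measure p E)"
      by (simp add: pistar_eq)
    thus ?thesis using Dpos_ind_meas by measurable
  qed
  have fpos: "0 < ennreal (pistar p E U \<delta> (fst z) (snd z)) * indicator (Dpos p) z" if z: "z \<in> Dpos p" for z
  proof -
    obtain x d where zz: "z = (x,d)" and d: "\<forall>k<p. 0 < d k" using z by (cases z) (auto simp: Dpos_def)
    have "P d > 0" unfolding P_def using d by (intro prod_pos) auto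
    hence "pistar p E U \<delta> x d > 0" unfolding pistar_eq by simp
    thus ?thesis using z zz by simp
  qed
  have part2: "0 < (\<integral>\<^sup>+ z. ennreal (pistar p E U \<delta> (fst z) (snd z)) * indicator (Dpos p) z
            \<partial>coord_measure p E)"
  proof (rule ccontr)
    assume "\<not> ?thesis"
    hence "(\<integral>\<^sup>+ z. ennreal (pistar p E U \<delta> (fst z) (snd z)) * indicator (Dpos p) z \<partial>coord_measure p E) = 0"
      by (simp add: not_gr_zero)
    hence "AE z in coord_measure p E. ennreal (pistar p E U \<delta> (fst z) (snd z)) * indicator (Dpos p) z = 0"
      by (simp add: nn_integral_0_iff_AE[OF mpi])
    hence "AE z in coord_measure p E. z \<notin> Dpos p"
      by (rule eventually_mono) (use fpos in force)
    hence "emeasure (coord_measure p E) (Dpos p \<inter> space (coord_measure p E)) = 0"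
      by (subst (asm) AE_iff_measurable[OF Dpos_sets]) auto
    thus False using Dpos_emeasure_pos by simp
  qed
  show ?thesis using part1 part2 part3 by blast
qed

end
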